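(* Let $N\ge 1$, $a_1,\dots,a_N>0$, $T_1,\dots,T_N\ge 0$, $P_{\mathrm{tot}}>0$, $c=\ln 2$, $\bar P_i=(2^{T_i}-1)/a_i$, and for $\lambda>0$ let $P_i(\lambda)=\frac{2}{\lambda c^2}W_0\!\left(\frac{\lambda c^2}{2a_i}2^{T_i}\right)-\frac1{a_i}$, $P_i^*(\lambda)=\min\{\bar P_i,\max\{0,P_i(\lambda)\}\}$ and $S(\lambda)=\sum_i P_i^*(\lambda)$, where $W_0$ is the principal branch of the Lambert W function. Consider the following algorithm with tolerance $\varepsilon>0$: if $P_{\mathrm{tot}}\ge\sum_i\bar P_i$, return $P_i=\bar P_i$; otherwise set $\lambda_{\mathrm{lo}}=0$, $\lambda_{\mathrm{hi}}=1$, and while $S(\lambda_{\mathrm{hi}})>P_{\mathrm{tot}}$ replace $\lambda_{\mathrm{hi}}$ by $2\lambda_{\mathrm{hi}}$; then repeat: set $\lambda=(\lambda_{\mathrm{lo}}+\lambda_{\mathrm{hi}})/2$, compute $P_i^*(\lambda)$ for all $i$ and $S(\lambda)$, set $\lambda_{\mathrm{lo}}=\lambda$ if $S(\lambda)>P_{\mathrm{tot}}$ and $\lambda_{\mathrm{hi}}=\lambda$ otherwise, until $|S(\lambda)-P_{\mathrm{tot}}|<\varepsilon$; return $(P_i^*(\lambda))_i$ and $\lambda$. Suppose $P_{\mathrm{tot}}<\sum_i\bar P_i$ and at least one channel has $a_i,T_i>0$. Then, for fixed problem data, the algorithm terminates after at most $O(\log(1/\varepsilon))$ bisection iterations; each iteration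 requires $N$ Lambert W evaluations and $O(N)$ elementary operations, for a total complexity of $O(N\log(1/\varepsilon))$.
   Context: For $z\ge 0$, $W_0(z)$ is the unique $w\ge 0$ with $we^w=z$; a Lambert W evaluation is counted as a unit-cost operation. *)

theory Defs
  imports "HOL-Analysis.Analysis" "HOL-Library.Landau_Symbols"
begin

definition lambertW0 :: "real \<Rightarrow> real" where
  "lambertW0 z = (THE w. w \<ge> 0 \<and> w * exp w = z)"

definition cst :: real where "cst = ln 2"

definition Pbar :: "(nat \<Rightarrow> real) \<Rightarrow> (nat \<Rightarrow> real) \<Rightarrow> nat \<Rightarrow> real" where
  "Pbar a T i = (2 powr T i - 1) / a i"

definition Plam :: "(nat \<Rightarrow> real) \<Rightarrow> (nat \<Rightarrow> real) \<Rightarrow> real \<Rightarrow> nat \<Rightarrow> real" where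
  "Plam a T lam i =
     2 / (lam * cst\<^sup>2) * lambertW0 (lam * cst\<^sup>2 / (2 * a i) * 2 powr T i) - 1 / a i"

definition Pstar :: "(nat \<Rightarrow> real) \<Rightarrow> (nat \<Rightarrow> real) \<Rightarrow> real \<Rightarrow> nat \<Rightarrow> real" where
  "Pstar a T lam i = min (Pbar a T i) (max 0 (Plam a T lam i))"

definition Ssum :: "nat \<Rightarrow> (nat \<Rightarrow> real) \<Rightarrow> (nat \<Rightarrow> real) \<Rightarrow> real \<Rightarrow> real" where
  "Ssum N a T lam = (\<Sum>i<N. Pstar a T lam i)"

text \<open>Doubling phase: lambda_hi = 1, doubled while S(lambda_hi) > Ptot.
  It terminates with lambda_hi = 2^k for the least k with S(2^k) <= Ptot.\<close>
definition hi0 :: "nat \<Rightarrow> (nat \<Rightarrow> real) \<Rightarrow> (nat \<Rightarrow> real) \<Rightarrow> real \<Rightarrow> real" where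
  "hi0 N a T Ptot = 2 ^ (LEAST k. Ssum N a T (2 ^ k) \<le> Ptot)"

definition bisect_step ::
  "nat \<Rightarrow> (nat \<Rightarrow> real) \<Rightarrow> (nat \<Rightarrow> real) \<Rightarrow> real \<Rightarrow> real \<times> real \<Rightarrow> real \<times> real" where
  "bisect_step N a T Ptot st =
     (let lam = (fst st + snd st) / 2
      in if Ssum N a T lam > Ptot then (lam, snd st) else (fst st, lam))"

text \<open>Bracket before bisection iteration m+1 (m completed iterations).\<close>
definition bracket :: "nat \<Rightarrow> (nat \<Rightarrow> real) \<Rightarrow> (nat \<Rightarrow> real) \<Rightarrow> real \<Rightarrow> nat \<Rightarrow> real \<times> real" where
  "bracket N a T Ptot m = (bisect_step N a T Ptot ^^ m) (0, hi0 N a T Ptot)"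

text \<open>The lambda evaluated in bisection iteration m+1.\<close>
definition mid :: "nat \<Rightarrow> (nat \<Rightarrow> real) \<Rightarrow> (nat \<Rightarrow> real) \<Rightarrow> real \<Rightarrow> nat \<Rightarrow> real" where
  "mid N a T Ptot m = (fst (bracket N a T Ptot m) + snd (bracket N a T Ptot m)) / 2"

definition stops :: "nat \<Rightarrow> (nat \<Rightarrow> real) \<Rightarrow> (nat \<Rightarrow> real) \<Rightarrow> real \<Rightarrow> real \<Rightarrow> nat \<Rightarrow> bool" where
  "stops N a T Ptot eps m \<longleftrightarrow> \<bar>Ssum N a T (mid N a T Ptot m) - Ptot\<bar> < eps"

text \<open>Number of bisection iterations performed (meaningful when the loop terminates).\<close>
definition bisect_iters :: "nat \<Rightarrow> (nat \<Rightarrow> real) \<Rightarrow> (nat \<Rightarrow> real) \<Rightarrow> real \<Rightarrow> real \<Rightarrow> nat" where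
  "bisect_iters N a T Ptot eps = Suc (LEAST m. stops N a T Ptot eps m)"

text \<open>Unit-cost operation count: each iteration does N Lambert W evaluations plus
  a fixed number of elementary operations per channel; we count N per iteration
  (up to the constant factor absorbed in O).\<close>
definition total_cost :: "nat \<Rightarrow> (nat \<Rightarrow> real) \<Rightarrow> (nat \<Rightarrow> real) \<Rightarrow> real \<Rightarrow> real \<Rightarrow> real" where
  "total_cost N a T Ptot eps = real N * real (bisect_iters N a T Ptot eps)"

end

theory Submission
  imports Defs
begin

lemma wexp_mono:
  fixes w1 w2 :: real
  assumes "0 \<le> w1" "w1 \<le> w2"
  shows "w2 - w1 \<le> w2 * exp w2 - w1 * exp w1"
proof -
  have "exp w1 \<le> exp w2" using assms by simp
  moreover have "1 \<le> exp w2" using assms by simp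
  moreover have "0 \<le> (w2 - w1) * (exp w2 - 1)" using assms calculation by simp
  moreover have "0 \<le> w1 * (exp w2 - exp w1)" using assms calculation by simp
  ultimately show ?thesis by (simp add: algebra_simps)
qed

lemma lw_ex1:
  fixes z :: real assumes "0 \<le> z"
  shows "\<exists>!w. w \<ge> 0 \<and> w * exp w = z"
proof -
  have "\<exists>x. 0 \<le> x \<and> x \<le> z \<and> x * exp x = z"
  proof (rule IVT')
    show "0 * exp 0 \<le> z" using assms by simp
    show "z \<le> z * exp z" using assms mult_left_mono[of 1 "exp z" z] by simp
    show "0 \<le> z" by fact
    show "continuous_on {0..z} (\<lambda>x::real. x * exp x)" by (intro continuous_intros)
  qed
  then obtain w where w: "0 \<le> w" "w * exp w = z" by blast
  show ?thesis
  proof (rule ex1I[of _ w])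
    show "0 \<le> w \<and> w * exp w = z" using w by simp
    fix y assume y: "0 \<le> y \<and> y * exp y = z"
    show "y = w"
    proof (cases "y \<le> w")
      case True
      then show ?thesis using wexp_mono[of y w] y w by simp
    next
      case False
      then show ?thesis using wexp_mono[of w y] y w by simp
    qed
  qed
qed

lemma lw_prop:
  fixes z :: real assumes "0 \<le> z"
  shows "lambertW0 z \<ge> 0" "lambertW0 z * exp (lambertW0 z) = z"
proof -
  have "lambertW0 z \<ge> 0 \<and> lambertW0 z * exp (lambertW0 z) = z"
    unfolding lambertW0_def by (rule theI'[OF lw_ex1[OF assms]])
  then show "lambertW0 z \<ge> 0" "lambertW0 z * exp (lambertW0 z) = z" by auto
qed

lemma lw0: "lambertW0 0 = 0"
  using lw_prop[of 0] by simp

lemma lw_lip: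
  fixes z1 z2 :: real assumes "0 \<le> z1" "0 \<le> z2"
  shows "\<bar>lambertW0 z1 - lambertW0 z2\<bar> \<le> \<bar>z1 - z2\<bar>"
proof (cases "lambertW0 z1 \<le> lambertW0 z2")
  case True
  then show ?thesis using wexp_mono[OF lw_prop(1)[OF assms(1)] True] lw_prop[OF assms(1)] lw_prop[OF assms(2)] by simp
next
  case False
  then show ?thesis using wexp_mono[OF lw_prop(1)[OF assms(2)], of "lambertW0 z1"] lw_prop[OF assms(1)] lw_prop[OF assms(2)] by simp
qed

lemma lw_ge:
  fixes z w0 :: real assumes "0 \<le> w0" "w0 * exp w0 \<le> z"
  shows "w0 \<le> lambertW0 z"
proof (rule ccontr)
  assume "\<not> w0 \<le> lambertW0 z"
  have z: "0 \<le> z" using assms by (smt (verit) mult_nonneg_nonneg exp_ge_zero)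
  show False using wexp_mono[OF lw_prop(1)[OF z], of w0] lw_prop(2)[OF z] assms \<open>\<not> w0 \<le> lambertW0 z\<close> by simp
qed

lemma exp_neg_lip:
  fixes u v :: real assumes "0 \<le> u" "0 \<le> v"
  shows "\<bar>exp (-u) - exp (-v)\<bar> \<le> \<bar>u - v\<bar>"
proof -
  have key: "exp (-x) - exp (-y) \<le> y - x \<and> exp(-y) \<le> exp (-x)" if "0 \<le> x" "x \<le> y" for x y :: real
  proof -
    have e: "exp (-y) = exp (-x) * exp (-(y - x))" by (simp add: exp_add[symmetric])
    have "1 - (y - x) \<le> exp (-(y-x))" using exp_ge_add_one_self[of "-(y-x)"] by (simp add: algebra_simps)
    hence "exp (-x) * (1 - (y - x)) \<le> exp (-x) * exp (-(y-x))" by (rule mult_left_mono) simp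
    moreover have "exp (-x) \<le> 1" using that by simp
    moreover have "exp (-x) * (y - x) \<le> 1 * (y - x)" using that calculation by (intro mult_right_mono) auto
    ultimately show ?thesis using e that by (simp add: algebra_simps)
  qed
  show ?thesis
  proof (cases "u \<le> v")
    case True then show ?thesis using key[of u v] assms by simp
  next
    case False then show ?thesis using key[of v u] assms by simp
  qed
qed

lemma clamp_lip:
  fixes c x y :: real
  shows "\<bar>min c (max 0 x) - min c (max 0 y)\<bar> \<le> \<bar>x - y\<bar>"
  by (simp add: min_def max_def abs_if)

definition Q :: "(nat \<Rightarrow> real) \<Rightarrow> (nat \<Rightarrow> real) \<Rightarrow> real \<Rightarrow> nat \<Rightarrow> real" where
  "Q a T lam i = (2 powr T i * exp (- lambertW0 (lam * cst\<^sup>2 / (2 * a i) * 2 powr T i)) - 1) / a i"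

lemma cst_pos: "cst > 0" unfolding cst_def by simp

lemma Plam_eq:
  assumes "a i > 0" "lam > 0"
  shows "Plam a T lam i = Q a T lam i"
proof -
  define x where "x = lam * cst\<^sup>2 / (2 * a i) * 2 powr T i"
  have x: "x \<ge> 0" unfolding x_def using assms by simp
  have W: "lambertW0 x = x * exp (- lambertW0 x)"
    using lw_prop(2)[OF x] by (simp add: exp_minus field_simps)
  have c: "cst \<noteq> 0" using cst_pos by simp
  have "2 / (lam * cst\<^sup>2) * lambertW0 x = 2 / (lam * cst\<^sup>2) * x * exp (- lambertW0 x)"
    by (subst W) simp
  also have "\<dots> = 2 powr T i / a i * exp (- lambertW0 x)"
    unfolding x_def using assms c by (simp add: field_simps power2_eq_square)
  finally show ?thesis unfolding Plam_def Q_def x_def[symmetric] using assms by (simp add: field_simps)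
qed

lemma Q0: "Q a T 0 i = Pbar a T i"
  unfolding Q_def Pbar_def by (simp add: lw0)

lemma Q_lip:
  assumes "a i > 0" "lam \<ge> 0" "mu \<ge> 0"
  shows "\<bar>Q a T lam i - Q a T mu i\<bar> \<le> (2 powr T i / a i * (cst\<^sup>2 / (2 * a i) * 2 powr T i)) * \<bar>lam - mu\<bar>"
proof -
  define k where "k = cst\<^sup>2 / (2 * a i) * 2 powr T i"
  have k: "k \<ge> 0" unfolding k_def using assms by simp
  have args: "lam * cst\<^sup>2 / (2 * a i) * 2 powr T i = k * lam" "mu * cst\<^sup>2 / (2 * a i) * 2 powr T i = k * mu"
    unfolding k_def by simp_all
  have x1: "k * lam \<ge> 0" "k * mu \<ge> 0" using k assms by simp_all
  have "Q a T lam i - Q a T mu i = 2 powr T i / a i * (exp (- lambertW0 (k*lam)) - exp (- lambertW0 (k*mu)))"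
    unfolding Q_def args using assms by (simp add: field_simps)
  hence "\<bar>Q a T lam i - Q a T mu i\<bar> = 2 powr T i / a i * \<bar>exp (- lambertW0 (k*lam)) - exp (- lambertW0 (k*mu))\<bar>"
    using assms by (simp add: abs_mult)
  also have "\<dots> \<le> 2 powr T i / a i * \<bar>lambertW0 (k*lam) - lambertW0 (k*mu)\<bar>"
    using assms exp_neg_lip[OF lw_prop(1)[OF x1(1)] lw_prop(1)[OF x1(2)]] by (intro mult_left_mono) auto
  also have "\<dots> \<le> 2 powr T i / a i * \<bar>k*lam - k*mu\<bar>"
    using assms lw_lip[OF x1] by (intro mult_left_mono) auto
  also have "\<dots> = 2 powr T i / a i * k * \<bar>lam - mu\<bar>"
    using k by (simp add: abs_mult right_diff_distrib[symmetric])
  finally show ?thesis unfolding k_def by simp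
qed


theorem theorem3:
  fixes N :: nat and a T :: "nat \<Rightarrow> real" and Ptot :: real
  assumes "N \<ge> 1"
    and "\<forall>i<N. a i > 0"
    and "\<forall>i<N. T i \<ge> 0"
    and "Ptot > 0"
    and "Ptot < (\<Sum>i<N. Pbar a T i)"
    and "\<exists>i<N. a i > 0 \<and> T i > 0"
  shows "(\<exists>k::nat. Ssum N a T (2 ^ k) \<le> Ptot)
    \<and> (\<forall>eps>0. \<exists>m. stops N a T Ptot eps m)
    \<and> (\<lambda>eps. real (bisect_iters N a T Ptot eps)) \<in> O[at_right 0](\<lambda>eps. ln (1 / eps))
    \<and> (\<lambda>eps. total_cost N a T Ptot eps) \<in> O[at_right 0](\<lambda>eps. real N * ln (1 / eps))"
proof -
  have ha: "\<And>i. i < N \<Longrightarrow> a i > 0" using assms(2) by blast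
  have hT: "\<And>i. i < N \<Longrightarrow> T i \<ge> 0" using assms(3) by blast
  define S' where "S' lam = (\<Sum>i<N. min (Pbar a T i) (max 0 (Q a T lam i)))" for lam
  define Li where "Li i = 2 powr T i / a i * (cst\<^sup>2 / (2 * a i) * 2 powr T i)" for i
  define L where "L = (\<Sum>i<N. Li i)"
  define PB where "PB = (\<Sum>i<N. Pbar a T i)"
  have Pbar_nn: "Pbar a T i \<ge> 0" if "i < N" for i
    using ha[OF that] hT[OF that] unfolding Pbar_def by (simp add: ge_one_powr_ge_zero)
  have Ssum_eq: "Ssum N a T lam = S' lam" if "lam > 0" for lam
    unfolding Ssum_def S'_def Pstar_def using Plam_eq[OF ha that] by simp
  have S'0: "S' 0 = PB"
    unfolding S'_def PB_def Q0 using Pbar_nn by (intro sum.cong) auto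
  have S'lip: "\<bar>S' lam - S' mu\<bar> \<le> L * \<bar>lam - mu\<bar>" if "lam \<ge> 0" "mu \<ge> 0" for lam mu
  proof -
    have "\<bar>S' lam - S' mu\<bar> = \<bar>\<Sum>i<N. min (Pbar a T i) (max 0 (Q a T lam i)) - min (Pbar a T i) (max 0 (Q a T mu i))\<bar>"
      unfolding S'_def by (simp add: sum_subtractf)
    also have "\<dots> \<le> (\<Sum>i<N. \<bar>min (Pbar a T i) (max 0 (Q a T lam i)) - min (Pbar a T i) (max 0 (Q a T mu i))\<bar>)"
      by (rule sum_abs)
    also have "\<dots> \<le> (\<Sum>i<N. Li i * \<bar>lam - mu\<bar>)"
    proof (rule sum_mono)
      fix i assume "i \<in> {..<N}"
      then have i: "i < N" by simp
      show "\<bar>min (Pbar a T i) (max 0 (Q a T lam i)) - min (Pbar a T i) (max 0 (Q a T mu i))\<bar> \<le> Li i * \<bar>lam - mu\<bar>"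
        using clamp_lip[of "Pbar a T i" "Q a T lam i" "Q a T mu i"] Q_lip[of a i lam mu T, OF ha[OF i] that]
        unfolding Li_def by linarith
    qed
    also have "\<dots> = L * \<bar>lam - mu\<bar>" unfolding L_def by (simp add: sum_distrib_right)
    finally show ?thesis .
  qed
  have S'bnd: "0 \<le> S' lam" "S' lam \<le> PB" for lam
  proof -
    show "0 \<le> S' lam" unfolding S'_def using Pbar_nn by (intro sum_nonneg) auto
    show "S' lam \<le> PB" unfolding S'_def PB_def by (intro sum_mono) auto
  qed
  have PBgt: "PB > Ptot" using assms(5) unfolding PB_def .
  define Lam where "Lam = (\<Sum>i<N. 2 * a i * T i / cst)"
  have big: "Ssum N a T lam = 0" if "lam \<ge> Lam" "lam > 0" for lam
  proof -
    have "Ssum N a T lam = (\<Sum>i<N. 0)"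
      unfolding Ssum_def
    proof (intro sum.cong refl)
      fix i assume "i \<in> {..<N}"
      then have i: "i < N" by simp
      have ai: "a i > 0" and Ti: "T i \<ge> 0" using ha[OF i] hT[OF i] by auto
      have c: "cst > 0" by (rule cst_pos)
      have "2 * a i * T i / cst \<le> Lam" unfolding Lam_def
        using i ha hT c by (intro member_le_sum) (auto intro!: divide_nonneg_pos mult_nonneg_nonneg simp: less_imp_le)
      hence l1: "2 * a i * T i / cst \<le> lam" using that by simp
      hence "2 * a i * T i \<le> lam * cst" using c by (simp add: divide_le_eq)
      hence l2: "T i \<le> lam * cst / (2 * a i)" using ai by (simp add: le_divide_eq mult.commute)
      define x where "x = lam * cst\<^sup>2 / (2 * a i) * 2 powr T i"
      have "(T i * cst) * exp (T i * cst) = T i * cst * 2 powr T i"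
        unfolding cst_def powr_def by (simp add: mult.commute)
      also have "\<dots> \<le> (lam * cst / (2 * a i)) * cst * 2 powr T i"
        using l2 c by (intro mult_right_mono) auto
      also have "\<dots> = x" unfolding x_def by (simp add: power2_eq_square)
      finally have "T i * cst \<le> lambertW0 x" using Ti c by (intro lw_ge) auto
      hence "exp (- lambertW0 x) \<le> exp (- (T i * cst))" by simp
      hence "2 powr T i * exp (- lambertW0 x) \<le> 2 powr T i * exp (- (T i * cst))" by simp
      also have "\<dots> = 1" unfolding cst_def powr_def by (simp add: exp_minus mult.commute)
      finally have "Q a T lam i \<le> 0" unfolding Q_def x_def[symmetric] using ai by (simp add: divide_le_0_iff)
      then show "Pstar a T lam i = 0" unfolding Pstar_def using Plam_eq[of a i lam T, OF ai that(2)] Pbar_nn[OF i] by simp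
    qed
    then show ?thesis by simp
  qed
  obtain k0 :: nat where k0: "max Lam 1 < 2 ^ k0" using real_arch_pow[of 2 "max Lam 1"] by auto
  have exk: "Ssum N a T (2 ^ k0) \<le> Ptot" using big[of "2^k0"] k0 assms(4) by simp
  define h0 where "h0 = hi0 N a T Ptot"
  have h0S: "Ssum N a T h0 \<le> Ptot" "h0 > 0"
    unfolding h0_def hi0_def using LeastI_ex[of "\<lambda>k. Ssum N a T (2 ^ k) \<le> Ptot"] exk by auto
  define lo where "lo m = fst (bracket N a T Ptot m)" for m
  define hi where "hi m = snd (bracket N a T Ptot m)" for m
  have mid_eq: "mid N a T Ptot m = (lo m + hi m) / 2" for m unfolding mid_def lo_def hi_def by simp
  have brSuc: "bracket N a T Ptot (Suc m) = bisect_step N a T Ptot (bracket N a T Ptot m)" for m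
    unfolding bracket_def by simp
  have inv: "0 \<le> lo m \<and> hi m - lo m = h0 / 2^m \<and> Ssum N a T (hi m) \<le> Ptot \<and> (lo m = 0 \<or> Ssum N a T (lo m) > Ptot)" for m
  proof (induction m)
    case 0
    then show ?case unfolding lo_def hi_def bracket_def h0_def[symmetric] using h0S by simp
  next
    case (Suc m)
    have hp: "0 < h0 / 2^m" using h0S(2) by simp
    have hl: "0 \<le> lo m + hi m" using hp Suc by linarith
    show ?case
    proof (cases "Ssum N a T ((lo m + hi m) / 2) > Ptot")
      case True
      then have lh: "lo (Suc m) = (lo m + hi m) / 2" "hi (Suc m) = hi m"
        unfolding lo_def hi_def brSuc bisect_step_def Let_def by auto
      moreover have "hi m - (lo m + hi m) / 2 = h0 / 2 ^ Suc m" using Suc by (simp add: field_simps)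
      ultimately show ?thesis unfolding lh using Suc True hl by simp
    next
      case False
      then have lh: "lo (Suc m) = lo m" "hi (Suc m) = (lo m + hi m) / 2"
        unfolding lo_def hi_def brSuc bisect_step_def Let_def by auto
      moreover have "(lo m + hi m) / 2 - lo m = h0 / 2 ^ Suc m" using Suc by (simp add: field_simps)
      ultimately show ?thesis unfolding lh using Suc False by simp
    qed
  qed
  define B where "B = PB + Ptot"
  define D where "D = PB - Ptot"
  define K where "K = max (L * h0 / 2) (B * L * h0 / D)"
  have Dpos: "D > 0" unfolding D_def using PBgt by simp
  have Lnn: "L \<ge> 0" unfolding L_def Li_def using ha by (intro sum_nonneg) (auto intro!: mult_nonneg_nonneg divide_nonneg_pos simp: less_imp_le)
  have bound: "2^m * \<bar>Ssum N a T (mid N a T Ptot m) - Ptot\<bar> \<le> K" for m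
  proof -
    have I: "0 \<le> lo m" "hi m - lo m = h0 / 2^m" "Ssum N a T (hi m) \<le> Ptot" "lo m = 0 \<or> Ssum N a T (lo m) > Ptot"
      using inv[of m] by auto
    have hpos: "hi m > 0" using I(1,2) h0S(2) by (smt (verit) divide_pos_pos zero_less_power)
    have mpos: "(lo m + hi m) / 2 > 0" using I(1) hpos by simp
    have Sm: "Ssum N a T (mid N a T Ptot m) = S' ((lo m + hi m) / 2)" unfolding mid_eq using Ssum_eq[OF mpos] by simp
    have Sh: "S' (hi m) \<le> Ptot" using I(3) Ssum_eq[OF hpos] by simp
    show ?thesis
    proof (cases "lo m = 0")
      case False
      then have lpos: "lo m > 0" using I(1) by simp
      have Sl: "S' (lo m) > Ptot" using I(4) False Ssum_eq[OF lpos] by simp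
      have "0 < h0 / 2^m" using h0S(2) by simp
      hence lh: "lo m \<le> hi m" using I(2) by linarith
      have ord: "lo m \<le> (lo m + hi m) / 2" "(lo m + hi m) / 2 \<le> hi m" using lh by simp_all
      have b1: "\<bar>(lo m + hi m) / 2 - hi m\<bar> = hi m - (lo m + hi m) / 2" using ord by linarith
      have b2: "\<bar>lo m - (lo m + hi m) / 2\<bar> = (lo m + hi m) / 2 - lo m" using ord by linarith
      have a1: "S' ((lo m + hi m) / 2) - S' (hi m) \<le> L * (hi m - (lo m + hi m) / 2)"
        using S'lip[of "(lo m + hi m) / 2" "hi m"] mpos hpos unfolding b1 by linarith
      have a2: "S' (lo m) - S' ((lo m + hi m) / 2) \<le> L * ((lo m + hi m) / 2 - lo m)"
        using S'lip[of "lo m" "(lo m + hi m) / 2"] mpos lpos unfolding b2 by linarith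
      have e1: "hi m - (lo m + hi m) / 2 = h0 / 2^m / 2" "(lo m + hi m) / 2 - lo m = h0 / 2^m / 2"
        using I(2) by (simp_all add: field_simps)
      have "\<bar>S' ((lo m + hi m) / 2) - Ptot\<bar> \<le> L * (h0 / 2^m / 2)"
        using a1 a2 e1 Sl Sh by (simp add: abs_le_iff)
      hence "2^m * \<bar>S' ((lo m + hi m) / 2) - Ptot\<bar> \<le> 2^m * (L * (h0 / 2^m / 2))"
        by (intro mult_left_mono) auto
      also have "\<dots> = L * h0 / 2" by simp
      finally show ?thesis unfolding Sm K_def by simp
    next
      case True
      have hm: "hi m = h0 / 2^m" using I(2) True by simp
      have "PB - S' (hi m) \<le> L * hi m"
        using S'lip[of 0 "hi m"] S'0 hpos by (simp add: abs_le_iff)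
      hence "D \<le> L * (h0 / 2^m)" using Sh hm unfolding D_def by simp
      hence "2^m * D \<le> L * h0" by (simp add: field_simps)
      hence pm: "2^m \<le> L * h0 / D" using Dpos by (simp add: le_divide_eq)
      have "\<bar>S' ((lo m + hi m) / 2) - Ptot\<bar> \<le> B"
        using S'bnd[of "(lo m + hi m) / 2"] assms(4) unfolding B_def by (simp add: abs_le_iff)
      hence "2^m * \<bar>S' ((lo m + hi m) / 2) - Ptot\<bar> \<le> 2^m * B" by (intro mult_left_mono) auto
      also have "\<dots> \<le> (L * h0 / D) * B" using pm B_def PBgt assms(4) S'bnd
        by (intro mult_right_mono) auto
      also have "\<dots> = B * L * h0 / D" by simp
      finally show ?thesis unfolding Sm K_def by simp
    qed
  qed
  have "0 \<le> L * h0 / 2" using Lnn h0S by simp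
  hence Knn: "K \<ge> 0" unfolding K_def by (rule max.coboundedI1)
  have stop_of: "stops N a T Ptot eps m" if "eps > 0" "(K + 1) / eps \<le> 2^m" for eps m
  proof -
    have "K + 1 \<le> 2^m * eps" using that by (simp add: divide_le_eq)
    hence "2^m * \<bar>Ssum N a T (mid N a T Ptot m) - Ptot\<bar> < 2^m * eps" using bound[of m] by linarith
    thus ?thesis unfolding stops_def by (simp add: mult_less_cancel_left_pos)
  qed
  have exstop: "\<exists>m. stops N a T Ptot eps m" if "eps > 0" for eps
  proof -
    obtain m :: nat where "(K + 1) / eps < 2 ^ m" using real_arch_pow[of 2 "(K + 1) / eps"] by auto
    then show ?thesis using stop_of[OF that] by (meson less_imp_le)
  qed
  define C where "C = (ln (K + 1) + 1) / ln 2 + 2"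
  have iters: "real (bisect_iters N a T Ptot eps) \<le> C * ln (1 / eps)" if e: "0 < eps" "eps < exp (-1)" for eps
  proof -
    define y where "y = (K + 1) / eps"
    define l where "l = ln (1 / eps)"
    have ypos: "y > 0" unfolding y_def using Knn e by simp
    have "ln eps < ln (exp (-1))" using e by (subst ln_less_cancel_iff) auto
    hence l1: "l \<ge> 1" unfolding l_def using e by (simp add: ln_div)
    have lnK: "ln (K + 1) \<ge> 0" using Knn by simp
    have lny: "ln y = ln (K + 1) + l" unfolding y_def l_def using Knn e
      by (simp add: ln_div ln_mult)
    define m0 where "m0 = nat \<lceil>ln y / ln 2\<rceil>"
    have "y = 2 powr (ln y / ln 2)" using ypos by (simp add: powr_def)
    also have "\<dots> \<le> 2 powr (real m0)" unfolding m0_def by (intro powr_mono real_nat_ceiling_ge) auto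
    also have "\<dots> = 2 ^ m0" by (simp add: powr_realpow)
    finally have "(K + 1) / eps \<le> 2 ^ m0" unfolding y_def .
    hence st: "stops N a T Ptot eps m0" by (rule stop_of[OF e(1)])
    have "(LEAST m. stops N a T Ptot eps m) \<le> m0" using st by (rule Least_le)
    hence "real (bisect_iters N a T Ptot eps) \<le> real m0 + 1" unfolding bisect_iters_def by simp
    also have "ln y / ln 2 \<ge> 0" using lny lnK l1 by simp
    hence "real m0 \<le> ln y / ln 2 + 1" unfolding m0_def by linarith
    hence "real m0 + 1 \<le> (ln (K + 1) + l) / ln 2 + 2" using lny by simp
    also have "\<dots> \<le> (ln (K + 1) * l + l) / ln 2 + 2 * l"
    proof -
      have "ln (K + 1) \<le> ln (K + 1) * l" using lnK l1 by (simp add: mult_le_cancel_left1)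
      hence "(ln (K + 1) + l) / ln 2 \<le> (ln (K + 1) * l + l) / ln 2" by (intro divide_right_mono) auto
      thus ?thesis using l1 by simp
    qed
    also have "\<dots> = C * l" unfolding C_def by (simp add: field_simps)
    finally show ?thesis unfolding l_def .
  qed
  have ev: "eventually (\<lambda>eps. 0 < eps \<and> eps < exp (-1)) (at_right (0::real))"
    unfolding eventually_at_right_field by (intro exI[of _ "exp (-1)"]) auto
  have O1: "(\<lambda>eps. real (bisect_iters N a T Ptot eps)) \<in> O[at_right 0](\<lambda>eps. ln (1 / eps))"
  proof (rule bigoI[where c = C])
    show "\<forall>\<^sub>F x in at_right 0. norm (real (bisect_iters N a T Ptot x)) \<le> C * norm (ln (1 / x))"
      using ev
    proof eventually_elim
      case (elim x)
      have "ln x < ln (exp (-1))" using elim by (subst ln_less_cancel_iff) auto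
      moreover have "ln (1/x) = - ln x" using elim by (simp add: ln_div)
      ultimately have "ln (1/x) \<ge> 0" by simp
      then show ?case using iters[of x] elim by simp
    qed
  qed
  have O2: "(\<lambda>eps. total_cost N a T Ptot eps) \<in> O[at_right 0](\<lambda>eps. real N * ln (1 / eps))"
  proof (rule bigoI[where c = C])
    show "\<forall>\<^sub>F x in at_right 0. norm (total_cost N a T Ptot x) \<le> C * norm (real N * ln (1 / x))"
      using ev
    proof eventually_elim
      case (elim x)
      have "ln x < ln (exp (-1))" using elim by (subst ln_less_cancel_iff) auto
      moreover have "ln (1/x) = - ln x" using elim by (simp add: ln_div)
      ultimately have l0: "ln (1/x) \<ge> 0" by simp
      have "real N * real (bisect_iters N a T Ptot x) \<le> real N * (C * ln (1 / x))"
        using iters[of x] elim by (intro mult_left_mono) auto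
      then show ?case unfolding total_cost_def using l0 by (simp add: abs_mult mult.left_commute)
    qed
  qed
  show ?thesis using exk exstop O1 O2 by blast
qed

end
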